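(* Let $G$ be a metrizable topological group. The following assertions are equivalent: (a) $G$ is separable; (b) $G$ is CCC; (c) $G$ is $\aleph_0$-bounded; (d) $C(G)$ has the countable sup property.
   Context: $G$ is CCC if every family of pairwise disjoint open subsets of $G$ is countable. $G$ is $\aleph_0$-bounded if for every nonempty open set $U\subseteq G$ there is a countable set $S\subseteq G$ with $G=U\cdot S=\bigcup_{s\in S}Us$. $C(G)$ is the vector lattice of real-valued continuous functions on $G$ with the pointwise order; a vector lattice has the countable sup property if every nonempty subset possessing a supremum contains a countable subset with the same supremum. *)

theory Defs
  imports "HOL-Analysis.Analysis" "HOL-Algebra.Group"
begin

definition topological_group :: "('a, 'b) monoid_scheme \<Rightarrow> 'a topology \<Rightarrow> bool" where
  "topological_group G X \<longleftrightarrow>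
     group G \<and> carrier G = topspace X \<and>
     continuous_map (prod_topology X X) X (\<lambda>(x, y). x \<otimes>\<^bsub>G\<^esub> y) \<and>
     continuous_map X X (\<lambda>x. inv\<^bsub>G\<^esub> x)"

definition ccc_space :: "'a topology \<Rightarrow> bool" where
  "ccc_space X \<longleftrightarrow>
     (\<forall>\<F>. (\<forall>U\<in>\<F>. openin X U) \<and> pairwise disjnt \<F> \<longrightarrow> countable \<F>)"

definition aleph0_bounded :: "('a, 'b) monoid_scheme \<Rightarrow> 'a topology \<Rightarrow> bool" where
  "aleph0_bounded G X \<longleftrightarrow>
     (\<forall>U. openin X U \<and> U \<noteq> {} \<longrightarrow>
        (\<exists>S. S \<subseteq> carrier G \<and> countable S \<and>
             carrier G = (\<Union>s\<in>S. (\<lambda>u. u \<otimes>\<^bsub>G\<^esub> s) ` U)))"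

text \<open>To make the pointwise order a genuine
partial order, functions are taken extensional (zero outside topspace X); the order is the
pointwise order of HOL functions.\<close>
definition cont_funs :: "'a topology \<Rightarrow> ('a \<Rightarrow> real) set" where
  "cont_funs X = {f. continuous_map X euclideanreal f \<and> (\<forall>x. x \<notin> topspace X \<longrightarrow> f x = 0)}"

definition is_sup_in_C :: "'a topology \<Rightarrow> ('a \<Rightarrow> real) set \<Rightarrow> ('a \<Rightarrow> real) \<Rightarrow> bool" where
  "is_sup_in_C X A s \<longleftrightarrow>
     s \<in> cont_funs X \<and> (\<forall>f\<in>A. f \<le> s) \<and>
     (\<forall>g\<in>cont_funs X. (\<forall>f\<in>A. f \<le> g) \<longrightarrow> s \<le> g)"

definition countable_sup_property :: "'a topology \<Rightarrow> bool" where
  "countable_sup_property X \<longleftrightarrow>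
     (\<forall>A s. A \<subseteq> cont_funs X \<and> A \<noteq> {} \<and> is_sup_in_C X A s \<longrightarrow>
        (\<exists>B. B \<subseteq> A \<and> countable B \<and> is_sup_in_C X B s))"

end

theory Submission
  imports Defs
begin



lemma dense_meet:
  assumes "X closure_of C = topspace X" "openin X U" "x \<in> U"
  shows "\<exists>y\<in>C. y \<in> U"
proof -
  have "x \<in> X closure_of C" using assms openin_subset by fastforce
  then have "\<forall>T. x \<in> T \<and> openin X T \<longrightarrow> (\<exists>y. y \<in> C \<and> y \<in> T)"
    by (simp add: in_closure_of)
  then show ?thesis using assms(2,3) by blast
qed

lemma dense_intro:
  assumes "C \<subseteq> topspace X"
    and "\<And>x T. x \<in> topspace X \<Longrightarrow> openin X T \<Longrightarrow> x \<in> T \<Longrightarrow> \<exists>y\<in>C. y \<in> T"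
  shows "X closure_of C = topspace X"
proof
  show "X closure_of C \<subseteq> topspace X" by (rule closure_of_subset_topspace)
  show "topspace X \<subseteq> X closure_of C"
  proof
    fix x assume x: "x \<in> topspace X"
    show "x \<in> X closure_of C" unfolding in_closure_of using assms(2) x by blast
  qed
qed

lemma sep_imp_ccc:
  assumes "separable_space X" shows "ccc_space X"
  unfolding ccc_space_def
proof clarify
  fix F assume op: "\<forall>U\<in>F. openin X U" and pw: "pairwise disjnt F"
  obtain C where C: "countable C" "C \<subseteq> topspace X" "X closure_of C = topspace X"
    using assms unfolding separable_space_def by blast
  define F' where "F' = F - {{}}"
  have ex: "\<exists>c. c \<in> C \<and> c \<in> U" if U: "U \<in> F'" for U
  proof -
    obtain x where "x \<in> U" using U F'_def by auto
    then show ?thesis using dense_meet[OF C(3), of U x] op U F'_def by auto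
  qed
  define c where "c U = (SOME c. c \<in> C \<and> c \<in> U)" for U
  have c: "c U \<in> C \<and> c U \<in> U" if "U \<in> F'" for U
    using someI_ex[OF ex[OF that]] c_def by simp
  have "inj_on c F'"
  proof (rule inj_onI)
    fix U V assume "U \<in> F'" "V \<in> F'" "c U = c V"
    show "U = V"
    proof (rule ccontr)
      assume "U \<noteq> V"
      moreover have "U \<in> F" "V \<in> F" using \<open>U \<in> F'\<close> \<open>V \<in> F'\<close> F'_def by auto
      ultimately have "disjnt U V" using pw by (simp add: pairwiseD)
      moreover have "c U \<in> U" "c U \<in> V" using c \<open>U \<in> F'\<close> \<open>V \<in> F'\<close> \<open>c U = c V\<close> by metis+
      ultimately show False by (auto simp: disjnt_iff)
    qed
  qed
  moreover have "c ` F' \<subseteq> C" using c by auto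
  then have "countable (c ` F')" using C(1) countable_subset by blast
  ultimately have "countable F'" using countable_image_inj_on by blast
  then have "countable (insert {} F')" by simp
  moreover have "F \<subseteq> insert {} F'" using F'_def by auto
  ultimately show "countable F" using countable_subset by blast
qed

context Metric_space begin

lemma sep_imp_sc:
  assumes "separable_space mtopology" shows "second_countable mtopology"
proof -
  obtain C where C: "countable C" "C \<subseteq> M" "mtopology closure_of C = M"
    using assms unfolding separable_space_def by auto
  define B where "B = (\<lambda>(c,r). mball c r) ` (C \<times> {r\<in>\<rat>. 0 < r})"
  have "countable {r::real\<in>\<rat>. 0 < r}"
    by (rule countable_subset[OF _ countable_rat]) auto
  then have "countable B" unfolding B_def using C(1) by auto
  moreover have "\<forall>V\<in>B. openin mtopology V"
  proof
    fix V assume "V \<in> B"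
    then obtain p where "V = (case p of (c,r) \<Rightarrow> mball c r)" unfolding B_def by blast
    then show "openin mtopology V" by (cases p) (simp only: prod.case openin_mball)
  qed
  moreover have "\<exists>V\<in>B. x \<in> V \<and> V \<subseteq> U" if UO: "openin mtopology U" and xU: "x \<in> U" for U x
  proof -
    have U: "U \<subseteq> M" "\<And>y. y \<in> U \<Longrightarrow> \<exists>r>0. mball y r \<subseteq> U"
      using UO unfolding openin_mtopology by auto
    obtain e where e: "e > 0" "mball x e \<subseteq> U" using U(2)[OF xU] by blast
    obtain r where r: "r \<in> \<rat>" "0 < r" "r < e/2" using Rats_dense_in_real[of 0 "e/2"] e by auto
    have xM: "x \<in> M" using U(1) xU by blast
    obtain c where c: "c \<in> C" "c \<in> mball x r"
      using dense_meet[of mtopology C "mball x r" x] C(3) xM r by auto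
    have cM: "c \<in> M" using c by auto
    have "mball c r \<in> B" unfolding B_def using c r by auto
    moreover have "x \<in> mball c r" using c xM by (auto simp: commute)
    moreover have "mball c r \<subseteq> mball x e"
    proof
      fix y assume "y \<in> mball c r"
      then have "y \<in> M" "d c y < r" by auto
      moreover have "d x y \<le> d x c + d c y" using triangle xM cM \<open>y \<in> M\<close> by blast
      ultimately show "y \<in> mball x e" using c r xM by auto
    qed
    ultimately show ?thesis using e by blast
  qed
  ultimately show ?thesis unfolding second_countable_def by blast
qed

lemma net_exists:
  assumes "0 < e"
  shows "\<exists>D\<subseteq>M. (\<forall>a\<in>D. \<forall>b\<in>D. a \<noteq> b \<longrightarrow> e \<le> d a b) \<and> (\<forall>x\<in>M. \<exists>a\<in>D. d x a < e)"
proof -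
  define A where "A = {D. D \<subseteq> M \<and> (\<forall>a\<in>D. \<forall>b\<in>D. a \<noteq> b \<longrightarrow> e \<le> d a b)}"
  have "\<forall>C\<in>chains A. \<Union>C \<in> A"
  proof
    fix C assume "C \<in> chains A"
    then have CA: "C \<subseteq> A" and ch: "\<forall>X\<in>C. \<forall>Y\<in>C. X \<subseteq> Y \<or> Y \<subseteq> X"
      by (auto simp: chains_def chain_subset_def)
    show "\<Union>C \<in> A" unfolding A_def
    proof (intro CollectI conjI ballI impI)
      show "\<Union>C \<subseteq> M" using CA A_def by auto
    next
      fix a b assume "a \<in> \<Union>C" "b \<in> \<Union>C" "a \<noteq> b"
      then obtain X Y where "X \<in> C" "Y \<in> C" "a \<in> X" "b \<in> Y" by auto
      then have "\<exists>Z\<in>C. a \<in> Z \<and> b \<in> Z" using ch by blast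
      then show "e \<le> d a b" using CA A_def \<open>a \<noteq> b\<close> by blast
    qed
  qed
  then obtain D where D: "D \<in> A" and mx: "\<forall>X\<in>A. D \<subseteq> X \<longrightarrow> X = D"
    using Zorn_Lemma by blast
  have cov: "\<forall>x\<in>M. \<exists>a\<in>D. d x a < e"
  proof
    fix x assume that: "x \<in> M"
    show "\<exists>a\<in>D. d x a < e"
  proof (rule ccontr)
    assume na: "\<not> (\<exists>a\<in>D. d x a < e)"
    then have "\<forall>a\<in>D. e \<le> d x a" by force
    then have "insert x D \<in> A" using D that unfolding A_def by (auto simp: commute)
    then have "insert x D = D" using mx by blast
    then have "x \<in> D" by blast
    then show False using na that assms by force
  qed
  qed
  have DM: "D \<subseteq> M" and Dsep: "\<forall>a\<in>D. \<forall>b\<in>D. a \<noteq> b \<longrightarrow> e \<le> d a b" using D unfolding A_def by auto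
  show ?thesis
    apply (rule exI[of _ D])
    using DM Dsep cov by simp
qed

lemma ccc_imp_sep:
  assumes "ccc_space mtopology" shows "separable_space mtopology"
proof -
  define P where "P n D \<longleftrightarrow> D \<subseteq> M \<and> (\<forall>a\<in>D. \<forall>b\<in>D. a \<noteq> b \<longrightarrow> inverse (real (Suc n)) \<le> d a b)
        \<and> (\<forall>x\<in>M. \<exists>a\<in>D. d x a < inverse (real (Suc n)))" for n D
  have "\<forall>n. \<exists>D. P n D"
  proof
    fix n
    have "0 < inverse (real (Suc n))" by simp
    from net_exists[OF this] show "\<exists>D. P n D" unfolding P_def .
  qed
  then have "\<exists>D. \<forall>n. P n (D n)" by (rule choice)
  then obtain D where DP: "\<forall>n. P n (D n)" by blast
  have Pn: "D n \<subseteq> M \<and> (\<forall>a\<in>D n. \<forall>b\<in>D n. a \<noteq> b \<longrightarrow> inverse (real (Suc n)) \<le> d a b)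
        \<and> (\<forall>x\<in>M. \<exists>a\<in>D n. d x a < inverse (real (Suc n)))" for n
    using DP unfolding P_def by simp
  have D1: "D n \<subseteq> M" for n using Pn[of n] by (rule conjunct1)
  have D2: "inverse (real (Suc n)) \<le> d a b" if "a \<in> D n" "b \<in> D n" "a \<noteq> b" for n a b
    using Pn[of n] that by blast
  have D3: "\<exists>a\<in>D n. d x a < inverse (real (Suc n))" if "x \<in> M" for n x
    using Pn[of n] that by blast
  note D = D1 D2 D3
  have cD: "countable (D n)" for n
  proof -
    define e where "e = inverse (real (Suc n))"
    have e: "e > 0" using e_def by simp
    define F where "F = (\<lambda>a. mball a (e/2)) ` D n"
    have "pairwise disjnt F"
      unfolding F_def pairwise_def
    proof clarify
      fix a b assume ab: "a \<in> D n" "b \<in> D n" "mball a (e/2) \<noteq> mball b (e/2)"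
      then have "a \<noteq> b" by blast
      then have "e \<le> d a b" using D(2) ab unfolding e_def by blast
      have "\<not> (y \<in> mball a (e/2) \<and> y \<in> mball b (e/2))" for y
      proof
        assume "y \<in> mball a (e/2) \<and> y \<in> mball b (e/2)"
        then have "d a y < e/2" "d b y < e/2" "a \<in> M" "b \<in> M" "y \<in> M" by auto
        moreover have "d a b \<le> d a y + d y b" using triangle \<open>a \<in> M\<close> \<open>b \<in> M\<close> \<open>y \<in> M\<close> by blast
        ultimately show False using \<open>e \<le> d a b\<close> commute[of y b] by linarith
      qed
      then show "disjnt (mball a (e / 2)) (mball b (e / 2))" by (auto simp: disjnt_iff)
    qed
    then have "countable F" using assms unfolding ccc_space_def F_def by auto
    moreover have "inj_on (\<lambda>a. mball a (e/2)) (D n)"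
    proof (rule inj_onI)
      fix a b assume ab: "a \<in> D n" "b \<in> D n" "mball a (e/2) = mball b (e/2)"
      show "a = b"
      proof (rule ccontr)
        assume "a \<noteq> b"
        then have "e \<le> d a b" using D(2) ab unfolding e_def by blast
        have "a \<in> M" using ab D(1) by blast
        then have "a \<in> mball b (e/2)" using ab e by (metis centre_in_mball_iff half_gt_zero)
        then show False using \<open>e \<le> d a b\<close> e by (simp add: commute)
      qed
    qed
    ultimately show ?thesis unfolding F_def using countable_image_inj_on by blast
  qed
  define C where "C = (\<Union>n. D n)"
  have "countable C" unfolding C_def using cD by auto
  moreover have "C \<subseteq> M" unfolding C_def using D(1) by auto
  moreover have "mtopology closure_of C = topspace mtopology"
  proof (rule dense_intro)
    show "C \<subseteq> topspace mtopology" using \<open>C \<subseteq> M\<close> by simp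
    fix x T assume "x \<in> topspace mtopology" "openin mtopology T" "x \<in> T"
    then have T: "T \<subseteq> M" "\<And>y. y \<in> T \<Longrightarrow> \<exists>r>0. mball y r \<subseteq> T"
      unfolding openin_mtopology by auto
    then obtain e where e: "e > 0" "mball x e \<subseteq> T" "x \<in> M" using \<open>x \<in> T\<close> by blast
    obtain n where n: "inverse (real (Suc n)) < e" using reals_Archimedean[OF e(1)] by blast
    obtain a where a: "a \<in> D n" "d x a < inverse (real (Suc n))" using D(3) e(3) by blast
    have "a \<in> M" using a D(1) by blast
    then have "a \<in> mball x e" using a n e by auto
    then show "\<exists>y\<in>C. y \<in> T" using a e unfolding C_def by blast
  qed
  ultimately show ?thesis unfolding separable_space_def by auto
qed

end




lemma sc_imp_csp:
  assumes "second_countable X" shows "countable_sup_property X"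
  unfolding countable_sup_property_def
proof clarify
  fix A s assume AC: "A \<subseteq> cont_funs X" and "A \<noteq> {}" and sup: "is_sup_in_C X A s"
  obtain \<B> where \<B>: "countable \<B>" "\<forall>V\<in>\<B>. openin X V"
    "\<And>U x. openin X U \<Longrightarrow> x \<in> U \<Longrightarrow> \<exists>V\<in>\<B>. x \<in> V \<and> V \<subseteq> U"
    using assms unfolding second_countable_def by metis
  define P where "P = (\<lambda>(V::'a set, q::real). \<exists>f\<in>A. \<exists>y\<in>V. q < f y)"
  define ch where "ch = (\<lambda>(V::'a set, q::real). SOME f. f \<in> A \<and> (\<exists>y\<in>V. q < f y))"
  define I where "I = {p \<in> \<B> \<times> \<rat>. P p}"
  define B where "B = ch ` I"
  have chI: "ch (V,q) \<in> A \<and> (\<exists>y\<in>V. q < ch (V,q) y)" if "P (V,q)" for V q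
  proof -
    have "\<exists>f. f \<in> A \<and> (\<exists>y\<in>V. q < f y)" using that P_def by auto
    from someI_ex[OF this] show ?thesis unfolding ch_def by simp
  qed
  have "B \<subseteq> A" unfolding B_def I_def using chI by auto
  moreover have "countable B"
  proof -
    have "countable (\<B> \<times> (\<rat>::real set))" using \<B>(1) countable_rat by blast
    then have "countable I" unfolding I_def by (rule countable_subset[rotated]) auto
    then show ?thesis unfolding B_def by simp
  qed
  moreover have "is_sup_in_C X B s"
    unfolding is_sup_in_C_def
  proof (intro conjI ballI impI)
    show "s \<in> cont_funs X" using sup unfolding is_sup_in_C_def by blast
  next
    fix f assume "f \<in> B" then show "f \<le> s" using \<open>B \<subseteq> A\<close> sup unfolding is_sup_in_C_def by blast
  next
    fix g assume gC: "g \<in> cont_funs X" and gB: "\<forall>f\<in>B. f \<le> g"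
    have "f \<le> g" if fA: "f \<in> A" for f
    proof (rule le_funI)
      fix x
      have fC: "f \<in> cont_funs X" using fA AC by blast
      show "f x \<le> g x"
      proof (cases "x \<in> topspace X")
        case False then show ?thesis using fC gC unfolding cont_funs_def by auto
      next
        case True
        show ?thesis
        proof (rule ccontr)
          assume "\<not> f x \<le> g x"
          then obtain q where q: "q \<in> \<rat>" "g x < q" "q < f x"
            using Rats_dense_in_real[of "g x" "f x"] by auto
          define W where "W = {y \<in> topspace X. f y \<in> {q<..}} \<inter> {y \<in> topspace X. g y \<in> {..<q}}"
          have fc: "continuous_map X euclideanreal f" using fC unfolding cont_funs_def by blast
          have gc: "continuous_map X euclideanreal g" using gC unfolding cont_funs_def by blast
          have "openin X W" unfolding W_def
            by (intro openin_Int openin_continuous_map_preimage[OF fc]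
                openin_continuous_map_preimage[OF gc]) auto
          moreover have "x \<in> W" using True q W_def by auto
          ultimately obtain V where V: "V \<in> \<B>" "x \<in> V" "V \<subseteq> W" using \<B>(3) by blast
          have "P (V,q)" unfolding P_def using fA V q by auto
          then have "(V,q) \<in> I" using V q I_def by auto
          then have "ch (V,q) \<in> B" using B_def by auto
          moreover obtain y where "y \<in> V" "q < ch (V,q) y" using chI[OF \<open>P (V,q)\<close>] by auto
          moreover have "g y < q" using \<open>y \<in> V\<close> V W_def by auto
          ultimately show False using gB by (meson le_funD less_le_not_le order.strict_trans)
        qed
      qed
    qed
    then show "s \<le> g" using sup gC unfolding is_sup_in_C_def by blast
  qed
  ultimately show "\<exists>B\<subseteq>A. countable B \<and> is_sup_in_C X B s" by blast
qed

lemma bump: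
  assumes "completely_regular_space X" "openin X U" "x \<in> U"
  shows "\<exists>h\<in>cont_funs X. (\<forall>y. 0 \<le> h y \<and> h y \<le> 1) \<and> h x = 1 \<and> (\<forall>y. h y \<noteq> 0 \<longrightarrow> y \<in> U)"
proof -
  have "closedin X (topspace X - U)" using assms(2) by blast
  moreover have "x \<in> topspace X - (topspace X - U)" using assms openin_subset by fastforce
  ultimately obtain f :: "'a \<Rightarrow> real" where f: "continuous_map X (top_of_set {0..1}) f"
    "f x = 0" "f ` (topspace X - U) \<subseteq> {1}"
    using assms(1) unfolding completely_regular_space_def by metis
  have fr: "f y \<in> {0..1}" if "y \<in> topspace X" for y
    using f(1) that continuous_map_image_subset_topspace by fastforce
  have fe: "continuous_map X euclideanreal f" using f(1) continuous_map_in_subtopology by blast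
  define h where "h y = (if y \<in> topspace X then 1 - f y else 0)" for y
  have "continuous_map X euclideanreal (\<lambda>y. 1 - f y)" using fe by (intro continuous_intros) auto
  then have "continuous_map X euclideanreal h" by (rule continuous_map_eq) (simp add: h_def)
  then have "h \<in> cont_funs X" unfolding cont_funs_def h_def by auto
  moreover have "\<forall>y. 0 \<le> h y \<and> h y \<le> 1" using fr h_def by force
  moreover have "h x = 1" using f(2) assms openin_subset h_def by fastforce
  moreover have "\<forall>y. h y \<noteq> 0 \<longrightarrow> y \<in> U"
  proof (intro allI impI)
    fix y assume "h y \<noteq> 0"
    then have yt: "y \<in> topspace X" "f y \<noteq> 1" unfolding h_def by (auto split: if_splits)
    show "y \<in> U"
    proof (rule ccontr)
      assume "y \<notin> U"
      then have "f y \<in> {1}" using f(3) yt(1) by blast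
      then show False using yt(2) by simp
    qed
  qed
  ultimately show ?thesis by blast
qed




context
  fixes G :: "('a, 'b) monoid_scheme" (structure) and X :: "'a topology"
  assumes tg: "topological_group G X"
begin

interpretation group G using tg unfolding topological_group_def by blast

lemma carr: "carrier G = topspace X" using tg unfolding topological_group_def by blast

lemma mult_cont: "continuous_map (prod_topology X X) X (\<lambda>(x, y). x \<otimes> y)"
  using tg unfolding topological_group_def by blast

lemma inv_cont: "continuous_map X X (\<lambda>x. inv x)"
  using tg unfolding topological_group_def by blast

lemma rt_cont:
  assumes "s \<in> carrier G" shows "continuous_map X X (\<lambda>u. u \<otimes> s)"
proof -
  have "continuous_map X (prod_topology X X) (\<lambda>u. (u, s))"
    using assms carr by (intro continuous_map_pairedI) auto
  then have "continuous_map X X ((\<lambda>(x, y). x \<otimes> y) \<circ> (\<lambda>u. (u, s)))"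
    using mult_cont by (rule continuous_map_compose)
  then show ?thesis by (simp add: o_def)
qed

lemma rt_open:
  assumes "openin X U" "s \<in> carrier G"
  shows "openin X ((\<lambda>u. u \<otimes> s) ` U)"
proof -
  have Uc: "U \<subseteq> carrier G" using assms(1) carr openin_subset by blast
  have "(\<lambda>u. u \<otimes> s) ` U = {y \<in> topspace X. y \<otimes> inv s \<in> U}"
  proof
    show "(\<lambda>u. u \<otimes> s) ` U \<subseteq> {y \<in> topspace X. y \<otimes> inv s \<in> U}"
    proof clarify
      fix u assume "u \<in> U"
      then have u: "u \<in> carrier G" using Uc by blast
      have "u \<otimes> s \<otimes> inv s = u" using u assms(2) by (simp add: m_assoc)
      then show "u \<otimes> s \<in> topspace X \<and> u \<otimes> s \<otimes> inv s \<in> U"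
        using u assms(2) carr \<open>u \<in> U\<close> by auto
    qed
    show "{y \<in> topspace X. y \<otimes> inv s \<in> U} \<subseteq> (\<lambda>u. u \<otimes> s) ` U"
    proof clarify
      fix y assume y: "y \<in> topspace X" "y \<otimes> inv s \<in> U"
      have yc: "y \<in> carrier G" using y carr by blast
      have "y = (y \<otimes> inv s) \<otimes> s" using yc assms(2) by (simp add: m_assoc)
      then show "y \<in> (\<lambda>u. u \<otimes> s) ` U" using y(2) by blast
    qed
  qed
  moreover have "openin X {y \<in> topspace X. y \<otimes> inv s \<in> U}"
    by (rule openin_continuous_map_preimage[OF rt_cont assms(1)]) (simp add: assms(2))
  ultimately show ?thesis by simp
qed

lemma lind_imp_aleph:
  assumes "Lindelof_space X" shows "aleph0_bounded G X"
  unfolding aleph0_bounded_def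
proof clarify
  fix U assume UO: "openin X U" and Une: "U \<noteq> {}"
  have Uc: "U \<subseteq> carrier G" using UO carr openin_subset by blast
  obtain u where u: "u \<in> U" using Une by blast
  define T where "T s = (\<lambda>v. v \<otimes> s) ` U" for s
  have Tc: "T s \<subseteq> carrier G" if "s \<in> carrier G" for s
    using Uc that unfolding T_def by auto
  have "\<Union>(T ` carrier G) = topspace X"
  proof
    show "\<Union>(T ` carrier G) \<subseteq> topspace X" using Tc carr by blast
    show "topspace X \<subseteq> \<Union>(T ` carrier G)"
    proof
      fix g assume "g \<in> topspace X"
      then have g: "g \<in> carrier G" using carr by blast
      have uc: "u \<in> carrier G" using u Uc by blast
      have "g = u \<otimes> (inv u \<otimes> g)" using g uc by (simp add: m_assoc[symmetric])
      then have "g \<in> T (inv u \<otimes> g)" unfolding T_def using u by blast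
      moreover have "inv u \<otimes> g \<in> carrier G" using g uc by simp
      ultimately show "g \<in> \<Union>(T ` carrier G)" by blast
    qed
  qed
  moreover have "\<forall>V\<in>T ` carrier G. openin X V" unfolding T_def using rt_open UO by blast
  ultimately obtain \<V> where V: "countable \<V>" "\<V> \<subseteq> T ` carrier G" "\<Union>\<V> = topspace X"
    using assms unfolding Lindelof_space_def by metis
  then obtain S where S: "countable S" "S \<subseteq> carrier G" "\<V> = T ` S"
    using countable_subset_image[of \<V> T "carrier G"] by blast
  have "carrier G = (\<Union>s\<in>S. (\<lambda>u. u \<otimes> s) ` U)"
    using V(3) S(3) carr unfolding T_def by simp
  then show "\<exists>S. S \<subseteq> carrier G \<and> countable S \<and> carrier G = (\<Union>s\<in>S. (\<lambda>u. u \<otimes> s) ` U)"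
    using S by blast
qed

lemma aleph_imp_sep:
  assumes fc: "first_countable X" and al: "aleph0_bounded G X"
  shows "separable_space X"
proof -
  have "\<one> \<in> topspace X" using carr one_closed by metis
  then obtain \<B> where B: "countable \<B>" "\<forall>V\<in>\<B>. openin X V"
    "\<And>U. openin X U \<Longrightarrow> \<one> \<in> U \<Longrightarrow> \<exists>V\<in>\<B>. \<one> \<in> V \<and> V \<subseteq> U"
    using fc unfolding first_countable_def by metis
  define B' where "B' = {V \<in> \<B>. \<one> \<in> V}"
  have "\<forall>V\<in>B'. \<exists>S. S \<subseteq> carrier G \<and> countable S \<and> carrier G = (\<Union>s\<in>S. (\<lambda>u. u \<otimes> s) ` V)"
    using al B(2) unfolding aleph0_bounded_def B'_def by blast
  then obtain SS where SS: "\<And>V. V \<in> B' \<Longrightarrow> SS V \<subseteq> carrier G \<and> countable (SS V) \<and>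
      carrier G = (\<Union>s\<in>SS V. (\<lambda>u. u \<otimes> s) ` V)"
    by metis
  define C where "C = \<Union>(SS ` B')"
  have "countable B'" using B(1) unfolding B'_def by simp
  then have "countable C" unfolding C_def using SS by blast
  moreover have "C \<subseteq> topspace X" unfolding C_def using SS carr by blast
  moreover have "X closure_of C = topspace X"
  proof (rule dense_intro)
    show "C \<subseteq> topspace X" by fact
    fix x T assume x: "x \<in> topspace X" and TO: "openin X T" and xT: "x \<in> T"
    have xc: "x \<in> carrier G" using x carr by blast
    define W where "W = {z \<in> topspace X. inv z \<otimes> x \<in> T}"
    have "continuous_map X X (\<lambda>z. inv z \<otimes> x)"
      using continuous_map_compose[OF inv_cont rt_cont[OF xc]] by (simp add: o_def)
    then have "openin X W" unfolding W_def using TO by (rule openin_continuous_map_preimage)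
    moreover have "\<one> \<in> W" unfolding W_def using xc xT one_closed carr by simp
    ultimately obtain V where V: "V \<in> \<B>" "\<one> \<in> V" "V \<subseteq> W" using B(3) by blast
    then have VB: "V \<in> B'" unfolding B'_def by blast
    then have "x \<in> (\<Union>s\<in>SS V. (\<lambda>u. u \<otimes> s) ` V)" using SS xc by blast
    then obtain s v where sv: "s \<in> SS V" "v \<in> V" "x = v \<otimes> s" by blast
    have sc: "s \<in> carrier G" using sv SS VB by blast
    have vc: "v \<in> carrier G" using sv V W_def carr by blast
    have "inv v \<otimes> x = s" using sv(3) sc vc by (simp add: m_assoc[symmetric])
    moreover have "inv v \<otimes> x \<in> T" using sv V W_def by blast
    ultimately have "s \<in> T" by simp
    moreover have "s \<in> C" unfolding C_def using sv VB by blast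
    ultimately show "\<exists>y\<in>C. y \<in> T" by blast
  qed
  ultimately show ?thesis unfolding separable_space_def by blast
qed

end




lemma csp_imp_ccc:
  assumes cr: "completely_regular_space X" and csp: "countable_sup_property X"
  shows "ccc_space X"
  unfolding ccc_space_def
proof clarify
  fix F assume op: "\<forall>U\<in>F. openin X U" and pw: "pairwise disjnt F"
  define N where "N = topspace X - X closure_of (\<Union>F)"
  define F' where "F' = insert N F"
  have NO: "openin X N" unfolding N_def by (intro openin_diff openin_topspace closedin_closure_of)
  have F'O: "\<forall>U\<in>F'. openin X U" using op NO F'_def by blast
  have UN: "disjnt N U" if "U \<in> F" for U
  proof -
    have "U \<subseteq> X closure_of (\<Union>F)"
      using that op closure_of_subset[of "\<Union>F" X] openin_subset by blast
    then show ?thesis unfolding N_def disjnt_def by blast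
  qed
  have pw': "pairwise disjnt F'"
    unfolding F'_def pairwise_insert using pw UN disjnt_sym by blast
  have same: "U = V" if "U \<in> F'" "V \<in> F'" "y \<in> U" "y \<in> V" for U V y
    using pw' that unfolding pairwise_def disjnt_def by blast
  define one :: "'a \<Rightarrow> real" where "one x = (if x \<in> topspace X then 1 else 0)" for x
  define A where "A = {f \<in> cont_funs X. (\<forall>x. 0 \<le> f x \<and> f x \<le> 1) \<and> (\<exists>U\<in>F'. \<forall>x. f x \<noteq> 0 \<longrightarrow> x \<in> U)}"
  have one_C: "one \<in> cont_funs X"
  proof -
    have "continuous_map X euclideanreal (\<lambda>x. 1::real)" by simp
    then have "continuous_map X euclideanreal one" by (rule continuous_map_eq) (simp add: one_def)
    then show ?thesis unfolding cont_funs_def one_def by simp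
  qed
  have AC: "A \<subseteq> cont_funs X" unfolding A_def by blast
  have Ane: "A \<noteq> {}"
  proof -
    have "(\<lambda>x. 0::real) \<in> cont_funs X" unfolding cont_funs_def by simp
    then have "(\<lambda>x. 0::real) \<in> A" unfolding A_def F'_def by auto
    then show ?thesis by blast
  qed
  have sup: "is_sup_in_C X A one"
    unfolding is_sup_in_C_def
  proof (intro conjI ballI impI)
    show "one \<in> cont_funs X" by (rule one_C)
  next
    fix f assume "f \<in> A"
    then have "f \<in> cont_funs X" "\<forall>x. f x \<le> 1" unfolding A_def by auto
    then show "f \<le> one" unfolding le_fun_def one_def cont_funs_def by auto
  next
    fix g assume gC: "g \<in> cont_funs X" and ub: "\<forall>f\<in>A. f \<le> g"
    have gc: "continuous_map X euclideanreal g" using gC unfolding cont_funs_def by blast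
    have "one x \<le> g x" for x
    proof (cases "x \<in> topspace X")
      case False then show ?thesis using gC unfolding cont_funs_def one_def by auto
    next
      case True
      show ?thesis
      proof (rule ccontr)
        assume "\<not> one x \<le> g x"
        then have gx: "g x < 1" using True one_def by simp
        have hit: False if hU: "U \<in> F'" and hy: "y \<in> U" and hg: "g y < 1" for U y
        proof -
          obtain h where h: "h \<in> cont_funs X" "\<forall>y. 0 \<le> h y \<and> h y \<le> 1" "h y = 1"
            "\<forall>z. h z \<noteq> 0 \<longrightarrow> z \<in> U"
            using bump[OF cr] F'O hU hy by blast
          have "\<exists>U\<in>F'. \<forall>x. h x \<noteq> 0 \<longrightarrow> x \<in> U" using h(4) hU by blast
          then have "h \<in> A" unfolding A_def using h(1,2) by simp
          then have "h \<le> g" using ub by blast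
          then have "h y \<le> g y" by (rule le_funD)
          then show False using h(3) hg by simp
        qed
        show False
        proof (cases "x \<in> N")
          case True then show False using hit[of N x] gx F'_def by blast
        next
          case False
          then have xcl: "x \<in> X closure_of (\<Union>F)" using True N_def by blast
          define W where "W = {y \<in> topspace X. g y \<in> {..<1}}"
          have "openin X W" unfolding W_def using gc by (rule openin_continuous_map_preimage) simp
          moreover have "x \<in> W" unfolding W_def using True gx by simp
          ultimately obtain y where "y \<in> \<Union>F" "y \<in> W" using xcl unfolding in_closure_of by blast
          then obtain U where "U \<in> F" "y \<in> U" "g y < 1" unfolding W_def by blast
          then show False using hit[of U y] F'_def by blast
        qed
      qed
    qed
    then show "one \<le> g" by (rule le_funI)
  qed
  obtain B where B: "B \<subseteq> A" "countable B" "is_sup_in_C X B one"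
    using csp AC Ane sup unfolding countable_sup_property_def by blast
  define ch where "ch f = (SOME U. U \<in> F' \<and> (\<forall>x. f x \<noteq> 0 \<longrightarrow> x \<in> U))" for f :: "'a \<Rightarrow> real"
  have chP: "ch f \<in> F' \<and> (\<forall>x. f x \<noteq> 0 \<longrightarrow> x \<in> ch f)" if "f \<in> A" for f
  proof -
    have "\<exists>U. U \<in> F' \<and> (\<forall>x. f x \<noteq> 0 \<longrightarrow> x \<in> U)" using that unfolding A_def by blast
    from someI_ex[OF this] show ?thesis unfolding ch_def .
  qed
  have "F \<subseteq> insert {} (ch ` B)"
  proof
    fix U assume UF: "U \<in> F"
    show "U \<in> insert {} (ch ` B)"
    proof (cases "U = {}")
      case True then show ?thesis by simp
    next
      case False
      then obtain x where xU: "x \<in> U" by blast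
      have UF': "U \<in> F'" using UF F'_def by blast
      obtain h where h: "h \<in> cont_funs X" "\<forall>y. 0 \<le> h y \<and> h y \<le> 1" "h x = 1"
        "\<forall>z. h z \<noteq> 0 \<longrightarrow> z \<in> U"
        using bump[OF cr] op UF xU by blast
      define g where "g y = (if y \<in> topspace X then 1 - h y else 0)" for y
      have hc: "continuous_map X euclideanreal h" using h(1) unfolding cont_funs_def by blast
      have "continuous_map X euclideanreal (\<lambda>y. 1 - h y)" using hc by (intro continuous_intros) auto
      then have "continuous_map X euclideanreal g" by (rule continuous_map_eq) (simp add: g_def)
      then have gC: "g \<in> cont_funs X" unfolding cont_funs_def g_def by simp
      have xt: "x \<in> topspace X" using xU op UF openin_subset by blast
      have "\<not> one \<le> g"
      proof
        assume "one \<le> g"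
        then have "one x \<le> g x" by (rule le_funD)
        then show False using xt h(3) unfolding one_def g_def by simp
      qed
      then have "\<not> (\<forall>f\<in>B. f \<le> g)" using B(3) gC unfolding is_sup_in_C_def by blast
      then obtain f y where fB: "f \<in> B" and fy: "\<not> f y \<le> g y" unfolding le_fun_def by blast
      have fA: "f \<in> A" using fB B(1) by blast
      have fC: "f \<in> cont_funs X" using fA AC by blast
      have yt: "y \<in> topspace X"
      proof (rule ccontr)
        assume "y \<notin> topspace X"
        then show False using fy fC unfolding cont_funs_def g_def by simp
      qed
      have f1: "f y \<le> 1" using fA unfolding A_def by blast
      have "h y \<noteq> 0" using fy f1 yt unfolding g_def by auto
      then have yU: "y \<in> U" using h(4) by blast
      have "g y \<ge> 0" using h(2) unfolding g_def by simp
      then have "f y \<noteq> 0" using fy by linarith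
      then have "y \<in> ch f" "ch f \<in> F'" using chP[OF fA] by blast+
      then have "U = ch f" using same[OF UF' _ yU] by blast
      then show ?thesis using fB by blast
    qed
  qed
  moreover have "countable (insert {} (ch ` B))" using B(2) by simp
  ultimately show "countable F" using countable_subset by blast
qed




theorem theorem4p10:
  fixes G :: "('a, 'b) monoid_scheme" and X :: "'a topology"
  assumes "topological_group G X" and "metrizable_space X"
  shows "(separable_space X \<longleftrightarrow> ccc_space X) \<and>
         (ccc_space X \<longleftrightarrow> aleph0_bounded G X) \<and>
         (aleph0_bounded G X \<longleftrightarrow> countable_sup_property X)"
proof -
  have cr: "completely_regular_space X" using assms(2) by (rule metrizable_imp_completely_regular_space)
  have fc: "first_countable X" using assms(2) by (rule metrizable_imp_first_countable)
  obtain M d where Md: "Metric_space M d" "X = Metric_space.mtopology M d"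
    using assms(2) unfolding metrizable_space_def by blast
  have s2sc: "second_countable X" if "separable_space X"
    using Metric_space.sep_imp_sc[OF Md(1)] that Md(2) by simp
  have c2s: "separable_space X" if "ccc_space X"
    using Metric_space.ccc_imp_sep[OF Md(1)] that Md(2) by simp
  have s2c: "ccc_space X" if "separable_space X" using sep_imp_ccc that by blast
  have s2a: "aleph0_bounded G X" if "separable_space X"
    using lind_imp_aleph[OF assms(1) second_countable_imp_Lindelof_space[OF s2sc[OF that]]] .
  have a2s: "separable_space X" if "aleph0_bounded G X"
    using aleph_imp_sep[OF assms(1) fc that] .
  have s2csp: "countable_sup_property X" if "separable_space X"
    using sc_imp_csp[OF s2sc[OF that]] .
  have csp2c: "ccc_space X" if "countable_sup_property X"
    using csp_imp_ccc[OF cr that] .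
  show ?thesis using s2sc c2s s2c s2a a2s s2csp csp2c by blast
qed


end
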